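(* Consider the linear structural causal model $\mathbf{x}=W\mathbf{x}+\mathbf{e}$ on $n$ variables and fix $i\in[n]$. Let the interventional model be $\mathbf{x}=W^{(i)}\mathbf{x}+\mathbf{e}^{(i)}$, where $W^{(i)}$ is $W$ with its $i$-th row set to zero and $\mathbf{e}^{(i)}$ is $\mathbf{e}$ with its $i$-th component replaced by a new noise $\tilde e_i$ independent of all other components. Then, given the observational distribution of $\mathbf{x}=(I-W)^{-1}\mathbf{e}$ and the interventional distribution of $\mathbf{x}=(I-W^{(i)})^{-1}\mathbf{e}^{(i)}$, the $i$-th row of $W$ can be recovered; consequently the parents of $x_i$ (the indices $j$ with $W_{ij}\neq 0$) and their causal effects $W_{ij}$ are identifiable.
   Context: Standing assumptions: $W\in\mathbb{R}^{n\times n}$ has zero diagonal ($W_{jj}=0$ for all $j$); $I-W$ is invertible; $I-W^{(i)}$ is invertible; the components of $\mathbf{e}$ are jointly independent with at most one Gaussian component, and likewise for $\mathbf{e}^{(i)}$. "Recovered/identifiable" means: any two models satisfying these assumptions that induce the same observational distribution and the same interventional distribution under intervention on $x_i$ have the same $i$-th row of $W$. *)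

theory Defs
  imports "HOL-Probability.Probability"
begin

text \<open>Linear SCM x = W x + e over the index type 'n (variables indexed by 'n, n = CARD('n)).\<close>

definition zero_row :: "real^'n^'n \<Rightarrow> 'n \<Rightarrow> real^'n^'n" where
  "zero_row W i = (\<chi> r c. if r = i then 0 else W $ r $ c)"

definition intervene_noise ::
  "('a \<Rightarrow> real^'n) \<Rightarrow> ('a \<Rightarrow> real) \<Rightarrow> 'n \<Rightarrow> 'a \<Rightarrow> real^'n" where
  "intervene_noise e et i \<omega> = (\<chi> j. if j = i then et \<omega> else e \<omega> $ j)"

definition gaussian_rv :: "'a measure \<Rightarrow> ('a \<Rightarrow> real) \<Rightarrow> bool" where
  "gaussian_rv M X \<longleftrightarrow> (\<exists>\<mu> \<sigma>. 0 < \<sigma> \<and> distributed M lborel X (normal_density \<mu> \<sigma>))"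

definition nondegenerate_rv :: "'a measure \<Rightarrow> ('a \<Rightarrow> real) \<Rightarrow> bool" where
  "nondegenerate_rv M X \<longleftrightarrow> \<not> (\<exists>c. AE \<omega> in M. X \<omega> = c)"

definition admissible_noise :: "'a measure \<Rightarrow> ('a \<Rightarrow> real^'n) \<Rightarrow> bool" where
  "admissible_noise M e \<longleftrightarrow>
     e \<in> borel_measurable M \<and>
     prob_space.indep_vars M (\<lambda>_. borel) (\<lambda>j \<omega>. e \<omega> $ j) UNIV \<and>
     (\<forall>j. nondegenerate_rv M (\<lambda>\<omega>. e \<omega> $ j)) \<and>
     card {j. gaussian_rv M (\<lambda>\<omega>. e \<omega> $ j)} \<le> 1"

definition lsem_model ::
  "'a measure \<Rightarrow> real^'n^'n \<Rightarrow> ('a \<Rightarrow> real^'n) \<Rightarrow> ('a \<Rightarrow> real) \<Rightarrow> 'n \<Rightarrow> bool" where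
  "lsem_model M W e et i \<longleftrightarrow>
     prob_space M \<and>
     (\<forall>j. W $ j $ j = 0) \<and>
     invertible (mat 1 - W) \<and>
     invertible (mat 1 - zero_row W i) \<and>
     et \<in> borel_measurable M \<and>
     admissible_noise M e \<and>
     admissible_noise M (intervene_noise e et i)"

definition obs_distr :: "'a measure \<Rightarrow> real^'n^'n \<Rightarrow> ('a \<Rightarrow> real^'n) \<Rightarrow> (real^'n) measure" where
  "obs_distr M W e = distr M borel (\<lambda>\<omega>. matrix_inv (mat 1 - W) *v e \<omega>)"

definition int_distr ::
  "'a measure \<Rightarrow> real^'n^'n \<Rightarrow> ('a \<Rightarrow> real^'n) \<Rightarrow> ('a \<Rightarrow> real) \<Rightarrow> 'n \<Rightarrow> (real^'n) measure" where
  "int_distr M W e et i =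
     distr M borel (\<lambda>\<omega>. matrix_inv (mat 1 - zero_row W i) *v intervene_noise e et i \<omega>)"

end

theory Submission
  imports Defs
begin


lemma (in prob_space) cf_indep:
  fixes X Y :: "'a \<Rightarrow> real"
  assumes "indep_var borel X borel Y"
  shows "(CLINT \<omega>|M. iexp (a * X \<omega> + b * Y \<omega>)) =
         (CLINT \<omega>|M. iexp (a * X \<omega>)) * (CLINT \<omega>|M. iexp (b * Y \<omega>))"
proof -
  from assms have [measurable]: "random_variable borel X" by (elim indep_var_rv1)
  from assms have [measurable]: "random_variable borel Y" by (elim indep_var_rv2)
  have "(CLINT \<omega>|M. iexp (a * X \<omega> + b * Y \<omega>)) = (CLINT \<omega>|M. iexp (a * X \<omega>) * iexp (b * Y \<omega>))"
    by (simp add: field_simps exp_add)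
  also have "\<dots> = (CLINT \<omega>|M. iexp (a * X \<omega>)) * (CLINT \<omega>|M. iexp (b * Y \<omega>))"
    by (intro indep_var_lebesgue_integral indep_var_compose[unfolded comp_def, OF assms])
       (auto intro!: integrable_iexp)
  finally show ?thesis .
qed

lemma (in prob_space) cf_unit_AE:
  fixes X :: "'a \<Rightarrow> real"
  assumes [measurable]: "random_variable borel X"
    and n1: "norm (CLINT \<omega>|M. iexp (s * X \<omega>)) = 1"
  shows "AE \<omega> in M. iexp (s * X \<omega>) = (CLINT \<omega>|M. iexp (s * X \<omega>))"
proof -
  define z where "z = (CLINT \<omega>|M. iexp (s * X \<omega>))"
  have z1: "Re z ^ 2 + Im z ^ 2 = 1" using n1 unfolding z_def[symmetric]
    by (simp add: cmod_def)
  define g where "g \<omega> = (cos (s * X \<omega>) - Re z)^2 + (sin (s * X \<omega>) - Im z)^2" for \<omega>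
  have geq: "g \<omega> = 2 - 2 * (Re z * cos (s * X \<omega>) + Im z * sin (s * X \<omega>))" for \<omega>
  proof -
    have "cos (s * X \<omega>)^2 + sin (s * X \<omega>)^2 = 1" by simp
    then show ?thesis using z1 unfolding g_def by (simp add: power2_eq_square algebra_simps)
  qed
  have [measurable]: "g \<in> borel_measurable M" unfolding g_def by measurable
  have intc: "integrable M (\<lambda>\<omega>. cos (s * X \<omega>))"
    by (intro integrable_const_bound[of _ 1]) auto
  have ints: "integrable M (\<lambda>\<omega>. sin (s * X \<omega>))"
    by (intro integrable_const_bound[of _ 1]) auto
  have iexp_int: "integrable M (\<lambda>\<omega>. iexp (s * X \<omega>))"
    by (intro integrable_iexp) auto
  have reZ: "Re z = (\<integral>\<omega>. cos (s * X \<omega>) \<partial>M)"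
    unfolding z_def using integral_Re[OF iexp_int] by (simp add: Re_exp)
  have imZ: "Im z = (\<integral>\<omega>. sin (s * X \<omega>) \<partial>M)"
    unfolding z_def using integral_Im[OF iexp_int] by (simp add: Im_exp)
  have intg: "integrable M g" unfolding geq using intc ints by auto
  have "integral\<^sup>L M g = 2 - 2 * (Re z * Re z + Im z * Im z)"
    unfolding geq using intc ints
    by (simp add: reZ imZ prob_space)
  also have "\<dots> = 0" using z1 by (simp add: power2_eq_square)
  finally have "AE \<omega> in M. g \<omega> = 0"
    using integral_nonneg_eq_0_iff_AE[OF intg] by (simp add: g_def)
  then show ?thesis unfolding z_def[symmetric]
  proof (rule AE_mp, intro AE_I2 impI)
    fix \<omega> assume "g \<omega> = 0"
    then have "cos (s * X \<omega>) = Re z" "sin (s * X \<omega>) = Im z"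
      unfolding g_def by (auto simp: add_nonneg_eq_0_iff)
    then show "iexp (s * X \<omega>) = z"
      by (simp add: complex_eq_iff Re_exp Im_exp)
  qed
qed

lemma (in prob_space) key_lemma:
  fixes X E :: "'a \<Rightarrow> real"
  assumes XE: "indep_var borel X borel E"
    and XY: "indep_var borel X borel (\<lambda>\<omega>. c * X \<omega> + E \<omega>)"
    and nd: "\<not> (\<exists>a. AE \<omega> in M. X \<omega> = a)"
  shows "c = 0"
proof (rule ccontr)
  assume c0: "c \<noteq> 0"
  from XE have [measurable]: "random_variable borel X" by (elim indep_var_rv1)
  from XE have [measurable]: "random_variable borel E" by (elim indep_var_rv2)
  define \<phi> where "\<phi> Z s = (CLINT \<omega>|M. iexp (s * Z \<omega>))" for Z :: "'a \<Rightarrow> real" and s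
  have f1: "\<phi> X (u + c * v) * \<phi> E v = \<phi> X u * (\<phi> X (c * v) * \<phi> E v)" for u v
  proof -
    have "\<phi> X (u + c * v) * \<phi> E v = (CLINT \<omega>|M. iexp ((u+c * v) * X \<omega> + v * E \<omega>))"
      unfolding \<phi>_def by (rule cf_indep[OF XE, symmetric])
    also have "\<dots> = (CLINT \<omega>|M. iexp (u * X \<omega> + v * (c * X \<omega> + E \<omega>)))"
      by (simp add: algebra_simps)
    also have "\<dots> = \<phi> X u * \<phi> (\<lambda>\<omega>. c * X \<omega> + E \<omega>) v"
      unfolding \<phi>_def by (rule cf_indep[OF XY])
    also have "\<phi> (\<lambda>\<omega>. c * X \<omega> + E \<omega>) v = \<phi> X (c * v) * \<phi> E v"
    proof -
      have "\<phi> (\<lambda>\<omega>. c * X \<omega> + E \<omega>) v = (CLINT \<omega>|M. iexp ((c * v) * X \<omega> + v * E \<omega>))"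
        unfolding \<phi>_def by (simp add: algebra_simps)
      also have "\<dots> = \<phi> X (c * v) * \<phi> E v"
        unfolding \<phi>_def by (rule cf_indep[OF XE])
      finally show ?thesis .
    qed
    finally show ?thesis .
  qed
  have phi0: "\<phi> Z 0 = 1" for Z by (simp add: \<phi>_def prob_space)
  have phicnj: "\<phi> X (-s) = cnj (\<phi> X s)" for s
  proof -
    have cj: "cnj (iexp r) = iexp (- r)" for r by (simp add: exp_cnj)
    have "\<phi> X (-s) = (CLINT \<omega>|M. cnj (iexp (s * X \<omega>)))"
      unfolding \<phi>_def cj by simp
    also have "\<dots> = cnj (\<phi> X s)" unfolding \<phi>_def by (rule Bochner_Integration.integral_cnj)
    finally show ?thesis .
  qed
  have "\<phi> E = char (distr M borel E)"
    by (auto simp: \<phi>_def char_def integral_distr fun_eq_iff)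
  then have "isCont (\<phi> E) 0"
    using real_distribution.isCont_char[OF real_distribution_distr] by simp
  then obtain \<delta> where \<delta>: "\<delta> > 0" "\<And>v. dist 0 v < \<delta> \<Longrightarrow> \<phi> E v \<noteq> 0"
    using continuous_at_avoid[of 0 "\<phi> E" 0] phi0 by auto
  have unit: "norm (\<phi> X (c * v)) = 1" if "\<bar>v\<bar> < \<delta>" for v
  proof -
    have ne: "\<phi> E v \<noteq> 0" using \<delta>(2)[of v] that by simp
    have "\<phi> X 0 * \<phi> E v = \<phi> X (-(c * v)) * (\<phi> X (c * v) * \<phi> E v)"
      using f1[of "-(c * v)" v] by simp
    then have "1 * \<phi> E v = (cnj (\<phi> X (c * v)) * \<phi> X (c * v)) * \<phi> E v"
      using phi0 phicnj by (simp add: mult.assoc)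
    then have "1 = cnj (\<phi> X (c * v)) * \<phi> X (c * v)"
      using ne by (metis mult_cancel_right)
    then have "complex_of_real (norm (\<phi> X (c * v)) ^ 2) = 1"
      by (simp only: complex_norm_square mult.commute)
    then have "norm (\<phi> X (c * v)) ^ 2 = 1" by (metis of_real_eq_1_iff)
    then show ?thesis using norm_ge_zero[of "\<phi> X (c * v)"] by (auto simp add: power2_eq_1_iff)
  qed
  define s where "s n = c * (\<delta> / (real n + 2))" for n :: nat
  have "AE \<omega> in M. iexp (s n * X \<omega>) = \<phi> X (s n)" for n
  proof -
    have "\<bar>\<delta> / (real n + 2)\<bar> < \<delta>" using \<delta>(1) by (simp add: field_simps add_pos_nonneg)
    then have "norm (\<phi> X (s n)) = 1" using unit unfolding s_def by blast
    then show ?thesis unfolding \<phi>_def by (intro cf_unit_AE) auto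
  qed
  then have AEall: "AE \<omega> in M. \<forall>n. iexp (s n * X \<omega>) = \<phi> X (s n)"
    by (simp add: AE_all_countable)
  define S where "S = {x. \<forall>n. iexp (s n * x) = \<phi> X (s n)}"
  have Suniq: "x = y" if xy: "x \<in> S" "y \<in> S" for x y
  proof (rule ccontr)
    assume ne: "x \<noteq> y"
    obtain n :: nat where n: "\<bar>c\<bar> * \<delta> * \<bar>x - y\<bar> / (2*pi) < real n"
      using reals_Archimedean2 by blast
    have "iexp (s n * x) = iexp (s n * y)" using xy unfolding S_def by auto
    then have "exp (\<i> * complex_of_real (s n * x) - \<i> * complex_of_real (s n * y)) = 1"
      by (simp add: exp_diff)
    then have "exp (\<i> * complex_of_real (s n * (x - y))) = 1"
      by (simp add: algebra_simps)
    then obtain k :: int where k: "s n * (x - y) = of_int (2 * k) * pi"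
      by (auto simp: exp_eq_1)
    have pos: "real n + 2 > 0" by simp
    have "\<bar>s n * (x - y)\<bar> = \<bar>c\<bar> * \<delta> * \<bar>x - y\<bar> / (real n + 2)"
      using \<delta>(1) by (simp add: s_def abs_mult)
    also have "\<dots> < 2 * pi"
    proof -
      have "\<bar>c\<bar> * \<delta> * \<bar>x - y\<bar> < 2 * pi * real n" using n by (simp add: field_simps)
      also have "\<dots> \<le> 2 * pi * (real n + 2)" by simp
      finally show ?thesis using pos by (simp add: field_simps)
    qed
    finally have "\<bar>real_of_int (2 * k) * pi\<bar> < 2 * pi" using k by simp
    then have "\<bar>real_of_int k\<bar> < 1" by (simp add: abs_mult)
    then have "k = 0" by linarith
    then have "s n * (x - y) = 0" using k by simp
    moreover have "s n \<noteq> 0" using c0 \<delta>(1) by (simp add: s_def)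
    ultimately show False using ne by simp
  qed
  have AES: "AE \<omega> in M. X \<omega> \<in> S" using AEall unfolding S_def by simp
  show False
  proof (cases "S = {}")
    case True
    then have "AE \<omega> in M. False" using AES by simp
    then show False by (simp add: AE_False)
  next
    case False
    then obtain x0 where x0: "x0 \<in> S" by auto
    have "AE \<omega> in M. X \<omega> = x0" using AES by (rule AE_mp) (auto intro!: AE_I2 Suniq x0)
    then show False using nd by blast
  qed
qed



lemma (in prob_space) indep_lincomb:
  fixes X :: "'i::finite \<Rightarrow> 'a \<Rightarrow> real"
  assumes ind: "indep_vars (\<lambda>_. borel) X UNIV" and AB: "A \<inter> B = {}"
  shows "indep_var borel (\<lambda>\<omega>. \<Sum>l\<in>A. a l * X l \<omega>) borel (\<lambda>\<omega>. \<Sum>l\<in>B. b l * X l \<omega>)"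
proof -
  have "indep_var (PiM A (\<lambda>_. borel)) (\<lambda>\<omega>. restrict (\<lambda>i. X i \<omega>) A)
                  (PiM B (\<lambda>_. borel)) (\<lambda>\<omega>. restrict (\<lambda>i. X i \<omega>) B)"
    by (rule indep_var_restrict[OF ind AB]) auto
  then have "indep_var borel ((\<lambda>f. \<Sum>l\<in>A. a l * f l) \<circ> (\<lambda>\<omega>. restrict (\<lambda>i. X i \<omega>) A))
                 borel ((\<lambda>f. \<Sum>l\<in>B. b l * f l) \<circ> (\<lambda>\<omega>. restrict (\<lambda>i. X i \<omega>) B))"
    by (rule indep_var_compose) measurable
  then show ?thesis by (simp add: comp_def cong: sum.cong)
qed

lemma minv:
  fixes A :: "real^'n^'n"
  assumes "invertible A"
  shows "A ** matrix_inv A = mat 1" "matrix_inv A ** A = mat 1"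
  using someI_ex[OF assms[unfolded invertible_def]] unfolding matrix_inv_def by auto

lemma indep_transfer:
  fixes h :: "'a \<Rightarrow> 'c" and Y :: "'i \<Rightarrow> 'c \<Rightarrow> real"
  assumes ps: "prob_space M" and h[measurable]: "h \<in> measurable M N"
    and Y[measurable]: "\<And>j. Y j \<in> borel_measurable N"
    and ind: "prob_space.indep_vars M (\<lambda>_. borel) (\<lambda>j \<omega>. Y j (h \<omega>)) UNIV"
  shows "prob_space.indep_vars (distr M N h) (\<lambda>_. borel) Y UNIV"
proof -
  interpret M: prob_space M by (rule ps)
  interpret N: prob_space "distr M N h" by (rule M.prob_space_distr) simp
  have 1: "distr M (PiM UNIV (\<lambda>_. borel)) (\<lambda>x. \<lambda>i\<in>UNIV. Y i (h x)) =
      PiM UNIV (\<lambda>i. distr M borel (\<lambda>\<omega>. Y i (h \<omega>)))"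
    using ind by (subst (asm) M.indep_vars_iff_distr_eq_PiM) auto
  have 2: "distr (distr M N h) (PiM UNIV (\<lambda>_. borel)) (\<lambda>x. \<lambda>i\<in>UNIV. Y i x)
      = distr M (PiM UNIV (\<lambda>_. borel)) (\<lambda>x. \<lambda>i\<in>UNIV. Y i (h x))"
    by (subst distr_distr) (auto simp: comp_def)
  have 3: "distr (distr M N h) borel (Y i) = distr M borel (\<lambda>\<omega>. Y i (h \<omega>))" for i
    by (subst distr_distr) (auto simp: comp_def)
  show ?thesis
    by (subst N.indep_vars_iff_distr_eq_PiM) (auto simp: 1 2 3)
qed

lemma nondeg_transfer:
  fixes h :: "'a \<Rightarrow> 'c" and Y :: "'c \<Rightarrow> real"
  assumes h[measurable]: "h \<in> measurable M N"
    and Y[measurable]: "Y \<in> borel_measurable N"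
    and nd: "nondegenerate_rv M (\<lambda>\<omega>. Y (h \<omega>))"
  shows "nondegenerate_rv (distr M N h) Y"
proof -
  have "(AE x in distr M N h. Y x = c) \<longleftrightarrow> (AE \<omega> in M. Y (h \<omega>) = c)" for c
    by (rule AE_distr_iff) auto
  then show ?thesis using nd unfolding nondegenerate_rv_def by simp
qed

lemma mvec_meas[measurable]:
  fixes A :: "real^'n^'n"
  assumes [measurable]: "e \<in> borel_measurable M"
  shows "(\<lambda>\<omega>. A *v e \<omega>) \<in> borel_measurable M"
proof -
  have "((*v) A) \<in> borel_measurable borel"
    by (intro borel_measurable_continuous_onI linear_continuous_on) simp
  then show ?thesis using measurable_compose[of e M borel "(*v) A" borel] by simp
qed

lemma noise_transfer:
  fixes L :: "real^'n^'n" and e :: "'a \<Rightarrow> real^'n"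
  assumes ps: "prob_space M" and adm: "admissible_noise M e" and inv: "invertible L"
  shows "prob_space (distr M borel (\<lambda>\<omega>. matrix_inv L *v e \<omega>))"
    and "prob_space.indep_vars (distr M borel (\<lambda>\<omega>. matrix_inv L *v e \<omega>)) (\<lambda>_. borel)
           (\<lambda>j v. (L *v v) $ j) UNIV"
    and "\<And>j. nondegenerate_rv (distr M borel (\<lambda>\<omega>. matrix_inv L *v e \<omega>)) (\<lambda>v. (L *v v) $ j)"
proof -
  interpret M: prob_space M by (rule ps)
  have e[measurable]: "e \<in> borel_measurable M" using adm unfolding admissible_noise_def by simp
  have h[measurable]: "(\<lambda>\<omega>. matrix_inv L *v e \<omega>) \<in> borel_measurable M" by measurable
  have Y[measurable]: "(\<lambda>v. (L *v v) $ j) \<in> borel_measurable borel" for j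
  proof -
    have "continuous_on UNIV (\<lambda>v. (L *v v) $ j)"
      unfolding matrix_vector_mult_def by (simp add: continuous_intros)
    then show ?thesis by (rule borel_measurable_continuous_onI)
  qed
  have comp: "L *v (matrix_inv L *v x) = x" for x
    by (simp add: matrix_vector_mul_assoc minv[OF inv])
  show "prob_space (distr M borel (\<lambda>\<omega>. matrix_inv L *v e \<omega>))"
    by (rule M.prob_space_distr) simp
  show "prob_space.indep_vars (distr M borel (\<lambda>\<omega>. matrix_inv L *v e \<omega>)) (\<lambda>_. borel)
           (\<lambda>j v. (L *v v) $ j) UNIV"
    by (rule indep_transfer[OF ps h]) (use adm in \<open>auto simp: comp admissible_noise_def\<close>)
  show "nondegenerate_rv (distr M borel (\<lambda>\<omega>. matrix_inv L *v e \<omega>)) (\<lambda>v. (L *v v) $ j)" for j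
    by (rule nondeg_transfer[OF h]) (use adm in \<open>auto simp: comp admissible_noise_def\<close>)
qed



lemma mv_comp: "(A *v v) $ k = (\<Sum>j\<in>UNIV. A $ k $ j * v $ j)"
  by (simp add: matrix_vector_mult_def)

lemma if10_mult: "(if P then 1 else 0) * (x::real) = (if P then x else 0)" by simp

lemma sum_split_at:
  fixes f :: "'n::finite \<Rightarrow> real"
  shows "(\<Sum>j\<in>UNIV. f j) = f i + (\<Sum>j\<in>UNIV - {i}. f j)"
  by (rule sum.remove) auto

lemma core_int:
  fixes V1 V2 :: "real^'n::finite^'n" and i k :: 'n
  assumes ps: "prob_space Q"
    and ind1: "prob_space.indep_vars Q (\<lambda>_. borel) (\<lambda>j v. (V1 *v v) $ j) UNIV"
    and ind2: "prob_space.indep_vars Q (\<lambda>_. borel) (\<lambda>j v. (V2 *v v) $ j) UNIV"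
    and nd1: "nondegenerate_rv Q (\<lambda>v. (V1 *v v) $ i)"
    and row1: "\<And>j. V1 $ i $ j = (if j = i then 1 else 0)"
    and row2: "\<And>j. V2 $ i $ j = (if j = i then 1 else 0)"
    and inv1: "invertible V1" and ki: "k \<noteq> i"
  shows "(V2 ** matrix_inv V1) $ k $ i = 0"
proof -
  interpret prob_space Q by (rule ps)
  define D where "D = V2 ** matrix_inv V1"
  have V2D: "V2 = D ** V1" unfolding D_def by (simp add: matrix_mul_assoc[symmetric] minv[OF inv1])
  have fi: "(V1 *v v) $ i = v $ i" for v
    by (simp add: mv_comp row1 if10_mult)
  have si: "(V2 *v v) $ i = v $ i" for v
    by (simp add: mv_comp row2 if10_mult)
  have sk: "(V2 *v v) $ k = D $ k $ i * (V1 *v v) $ i + (\<Sum>j\<in>UNIV - {i}. D $ k $ j * (V1 *v v) $ j)" for v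
  proof -
    have "(V2 *v v) $ k = (D *v (V1 *v v)) $ k" by (simp add: V2D matrix_vector_mul_assoc)
    also have "\<dots> = (\<Sum>j\<in>UNIV. D $ k $ j * (V1 *v v) $ j)" by (rule mv_comp)
    finally show ?thesis by (simp add: sum_split_at[of _ i])
  qed
  have XE: "indep_var borel (\<lambda>v. (V1 *v v) $ i) borel (\<lambda>v. \<Sum>j\<in>UNIV - {i}. D $ k $ j * (V1 *v v) $ j)"
    using indep_lincomb[OF ind1, of "{i}" "UNIV - {i}" "\<lambda>_. 1" "\<lambda>j. D $ k $ j"] by simp
  have "indep_var borel (\<lambda>v. (V2 *v v) $ i) borel (\<lambda>v. (V2 *v v) $ k)"
    using indep_lincomb[OF ind2, of "{i}" "{k}" "\<lambda>_. 1" "\<lambda>_. 1"] ki by simp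
  then have XY: "indep_var borel (\<lambda>v. (V1 *v v) $ i) borel
      (\<lambda>v. D $ k $ i * (V1 *v v) $ i + (\<Sum>j\<in>UNIV - {i}. D $ k $ j * (V1 *v v) $ j))"
    by (simp add: fi si sk)
  show ?thesis unfolding D_def[symmetric]
    by (rule key_lemma[OF XE XY]) (use nd1 in \<open>simp add: nondegenerate_rv_def\<close>)
qed

lemma core_obs:
  fixes U1 U2 V1 V2 :: "real^'n::finite^'n" and i k :: 'n
  assumes ps: "prob_space P"
    and ind1: "prob_space.indep_vars P (\<lambda>_. borel) (\<lambda>j v. (U1 *v v) $ j) UNIV"
    and ind2: "prob_space.indep_vars P (\<lambda>_. borel) (\<lambda>j v. (U2 *v v) $ j) UNIV"
    and nd2: "nondegenerate_rv P (\<lambda>v. (U2 *v v) $ k)"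
    and r1: "\<And>l. l \<noteq> i \<Longrightarrow> U1 $ l = V1 $ l"
    and r2: "\<And>l. l \<noteq> i \<Longrightarrow> U2 $ l = V2 $ l"
    and D0: "\<And>l. l \<noteq> i \<Longrightarrow> (V2 ** matrix_inv V1) $ l $ i = 0"
    and inv1: "invertible V1" and inv2: "invertible U2" and ki: "k \<noteq> i"
  shows "(U1 ** matrix_inv U2) $ i $ k = 0"
proof -
  interpret prob_space P by (rule ps)
  define D where "D = V2 ** matrix_inv V1"
  define C where "C = U1 ** matrix_inv U2"
  have V2D: "V2 = D ** V1" unfolding D_def by (simp add: matrix_mul_assoc[symmetric] minv[OF inv1])
  have U1C: "U1 = C ** U2" unfolding C_def by (simp add: matrix_mul_assoc[symmetric] minv[OF inv2])
  have tk: "(U2 *v v) $ k = (\<Sum>j\<in>UNIV - {i}. D $ k $ j * (U1 *v v) $ j)" for v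
  proof -
    have "(U2 *v v) $ k = (V2 *v v) $ k" using r2[OF ki] by (simp add: mv_comp)
    also have "\<dots> = (D *v (V1 *v v)) $ k" by (simp add: V2D matrix_vector_mul_assoc)
    also have "\<dots> = (\<Sum>j\<in>UNIV. D $ k $ j * (V1 *v v) $ j)" by (rule mv_comp)
    also have "\<dots> = (\<Sum>j\<in>UNIV - {i}. D $ k $ j * (V1 *v v) $ j)"
      using D0[OF ki] by (simp add: sum_split_at[of _ i] D_def)
    also have "\<dots> = (\<Sum>j\<in>UNIV - {i}. D $ k $ j * (U1 *v v) $ j)"
      by (intro sum.cong refl) (simp add: mv_comp r1)
    finally show ?thesis .
  qed
  have ei: "(U1 *v v) $ i = C $ i $ k * (U2 *v v) $ k + (\<Sum>l\<in>UNIV - {k}. C $ i $ l * (U2 *v v) $ l)" for v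
  proof -
    have "(U1 *v v) $ i = (C *v (U2 *v v)) $ i" by (simp add: U1C matrix_vector_mul_assoc)
    also have "\<dots> = (\<Sum>l\<in>UNIV. C $ i $ l * (U2 *v v) $ l)" by (rule mv_comp)
    finally show ?thesis by (simp add: sum_split_at[of _ k])
  qed
  have XE: "indep_var borel (\<lambda>v. (U2 *v v) $ k) borel (\<lambda>v. \<Sum>l\<in>UNIV - {k}. C $ i $ l * (U2 *v v) $ l)"
    using indep_lincomb[OF ind2, of "{k}" "UNIV - {k}" "\<lambda>_. 1" "\<lambda>l. C $ i $ l"] by simp
  have "indep_var borel (\<lambda>v. \<Sum>j\<in>UNIV - {i}. D $ k $ j * (U1 *v v) $ j) borel (\<lambda>v. (U1 *v v) $ i)"
    using indep_lincomb[OF ind1, of "UNIV - {i}" "{i}" "\<lambda>j. D $ k $ j" "\<lambda>_. 1"] by simp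
  moreover have e1: "(\<lambda>v. \<Sum>j\<in>UNIV - {i}. D $ k $ j * (U1 *v v) $ j) = (\<lambda>v. (U2 *v v) $ k)"
    using tk by simp
  moreover have e2: "(\<lambda>v. (U1 *v v) $ i) =
     (\<lambda>v. C $ i $ k * (U2 *v v) $ k + (\<Sum>l\<in>UNIV - {k}. C $ i $ l * (U2 *v v) $ l))"
    using ei by simp
  ultimately have XY: "indep_var borel (\<lambda>v. (U2 *v v) $ k) borel
     (\<lambda>v. C $ i $ k * (U2 *v v) $ k + (\<Sum>l\<in>UNIV - {k}. C $ i $ l * (U2 *v v) $ l))"
    by simp
  show ?thesis unfolding C_def[symmetric]
    by (rule key_lemma[OF XE XY]) (use nd2 in \<open>simp add: nondegenerate_rv_def\<close>)
qed



theorem proposition1: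
  fixes i :: "'n::finite"
    and M :: "'a measure" and W :: "real^'n^'n" and e :: "'a \<Rightarrow> real^'n" and et :: "'a \<Rightarrow> real"
    and M' :: "'b measure" and W' :: "real^'n^'n" and e' :: "'b \<Rightarrow> real^'n" and et' :: "'b \<Rightarrow> real"
  assumes "lsem_model M W e et i"
    and "lsem_model M' W' e' et' i"
    and "obs_distr M W e = obs_distr M' W' e'"
    and "int_distr M W e et i = int_distr M' W' e' et' i"
  shows "W $ i = W' $ i \<and> {j. W $ i $ j \<noteq> 0} = {j. W' $ i $ j \<noteq> 0}"
proof -
  note m1 = assms(1)[unfolded lsem_model_def] and m2 = assms(2)[unfolded lsem_model_def]
  define U1 where "U1 = mat 1 - W"
  define U2 where "U2 = mat 1 - W'"
  define V1 where "V1 = mat 1 - zero_row W i"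
  define V2 where "V2 = mat 1 - zero_row W' i"
  define P where "P = obs_distr M W e"
  define Q where "Q = int_distr M W e et i"
  have P1: "P = distr M borel (\<lambda>\<omega>. matrix_inv U1 *v e \<omega>)"
    unfolding P_def obs_distr_def U1_def ..
  have P2: "P = distr M' borel (\<lambda>\<omega>. matrix_inv U2 *v e' \<omega>)"
    using assms(3) unfolding P_def obs_distr_def U2_def by simp
  have Q1: "Q = distr M borel (\<lambda>\<omega>. matrix_inv V1 *v intervene_noise e et i \<omega>)"
    unfolding Q_def int_distr_def V1_def ..
  have Q2: "Q = distr M' borel (\<lambda>\<omega>. matrix_inv V2 *v intervene_noise e' et' i \<omega>)"
    using assms(4) unfolding Q_def int_distr_def V2_def by simp
  note tP1 = noise_transfer[of M e U1, folded P1] and tP2 = noise_transfer[of M' e' U2, folded P2]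
  note tQ1 = noise_transfer[of M "intervene_noise e et i" V1, folded Q1]
  note tQ2 = noise_transfer[of M' "intervene_noise e' et' i" V2, folded Q2]
  have invU1: "invertible U1" and invU2: "invertible U2" and invV1: "invertible V1" and invV2: "invertible V2"
    using m1 m2 by (simp_all add: U1_def U2_def V1_def V2_def)
  have psP: "prob_space P" using tP1(1) m1 invU1 by blast
  have psQ: "prob_space Q" using tQ1(1) m1 invV1 by blast
  have indU1: "prob_space.indep_vars P (\<lambda>_. borel) (\<lambda>j v. (U1 *v v) $ j) UNIV"
    using tP1(2) m1 invU1 by blast
  have indU2: "prob_space.indep_vars P (\<lambda>_. borel) (\<lambda>j v. (U2 *v v) $ j) UNIV"
    using tP2(2) m2 invU2 by blast
  have ndU2: "nondegenerate_rv P (\<lambda>v. (U2 *v v) $ j)" for j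
    using tP2(3) m2 invU2 by blast
  have indV1: "prob_space.indep_vars Q (\<lambda>_. borel) (\<lambda>j v. (V1 *v v) $ j) UNIV"
    using tQ1(2) m1 invV1 by blast
  have indV2: "prob_space.indep_vars Q (\<lambda>_. borel) (\<lambda>j v. (V2 *v v) $ j) UNIV"
    using tQ2(2) m2 invV2 by blast
  have ndV1: "nondegenerate_rv Q (\<lambda>v. (V1 *v v) $ j)" for j
    using tQ1(3) m1 invV1 by blast
  have row1: "V1 $ i $ j = (if j = i then 1 else 0)" for j
    by (simp add: V1_def zero_row_def mat_def)
  have row2: "V2 $ i $ j = (if j = i then 1 else 0)" for j
    by (simp add: V2_def zero_row_def mat_def)
  have r1: "U1 $ l = V1 $ l" if "l \<noteq> i" for l
    using that by (simp add: U1_def V1_def zero_row_def mat_def vec_eq_iff)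
  have r2: "U2 $ l = V2 $ l" if "l \<noteq> i" for l
    using that by (simp add: U2_def V2_def zero_row_def mat_def vec_eq_iff)
  have D0: "(V2 ** matrix_inv V1) $ l $ i = 0" if "l \<noteq> i" for l
    by (rule core_int[OF psQ indV1 indV2 ndV1 row1 row2 invV1 that])
  define C where "C = U1 ** matrix_inv U2"
  have C0: "C $ i $ k = 0" if "k \<noteq> i" for k
    unfolding C_def by (rule core_obs[OF psP indU1 indU2 ndU2 r1 r2 D0 invV1 invU2 that])
  have U1C: "U1 = C ** U2" unfolding C_def by (simp add: matrix_mul_assoc[symmetric] minv[OF invU2])
  have rowC: "U1 $ i $ j = C $ i $ i * U2 $ i $ j" for j
  proof -
    have "U1 $ i $ j = (\<Sum>l\<in>UNIV. C $ i $ l * U2 $ l $ j)"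
      by (simp add: U1C matrix_matrix_mult_def)
    also have "\<dots> = C $ i $ i * U2 $ i $ j + (\<Sum>l\<in>UNIV - {i}. C $ i $ l * U2 $ l $ j)"
      by (rule sum_split_at)
    also have "(\<Sum>l\<in>UNIV - {i}. C $ i $ l * U2 $ l $ j) = 0"
      by (intro sum.neutral) (auto simp: C0)
    finally show ?thesis by simp
  qed
  have d1: "U1 $ i $ i = 1" using m1 by (simp add: U1_def mat_def)
  have d2: "U2 $ i $ i = 1" using m2 by (simp add: U2_def mat_def)
  have Cii: "C $ i $ i = 1" using rowC[of i] d1 d2 by simp
  have "W $ i $ j = W' $ i $ j" for j
    using rowC[of j] Cii by (simp add: U1_def U2_def)
  then have "W $ i = W' $ i" by (simp add: vec_eq_iff)
  then show ?thesis by simp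
qed

end
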